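(* Assume the environments are defined by a class of linear spurious correlation latent SCMs $\mathcal{M}_\mathcal{E}$, and let $e^+$ be any test domain with $\mathcal{M}_{e^+}\in\mathcal{M}_\mathcal{E}$. Let $\theta\in\mathbb{R}^d$ satisfy the NCM constraint $\theta^\top\tilde{Q}_r=0$. Then: (a) for logistic regression with log loss $\ell_{\mathrm{LL}}$, $$\mathbb{E}_{({\mathbf{x}}_{e^+},{\textnormal{y}}_{e^+})\sim\mathbb{P}_{\mathrm{test}}}[\ell_{\mathrm{LL}}(\theta^\top{\mathbf{x}}_{e^+},{\textnormal{y}}_{e^+})]\le\mathbb{E}_{({\mathbf{x}},{\textnormal{y}})\sim\mathbb{P}_{\mathrm{train}}}[\ell_{\mathrm{LL}}(\theta^\top{\mathbf{x}},{\textnormal{y}})]+\|\theta\|\,\big\|\tilde{Q}_{r,\perp}^\top Q\,\Lambda^{1/2}\big\|;$$ (b) for linear regression with squared error loss $\ell_{\mathrm{SE}}$, $$\mathbb{E}_{({\mathbf{x}}_{e^+},{\textnormal{y}}_{e^+})\sim\mathbb{P}_{\mathrm{test}}}[\ell_{\mathrm{SE}}(\theta^\top{\mathbf{x}}_{e^+},{\textnormal{y}}_{e^+})]\le 2\,\mathbb{E}_{({\mathbf{x}},{\textnormal{y}})\sim\mathbb{P}_{\mathrm{train}}}[\ell_{\mathrm{SE}}(\theta^\top{\mathbf{x}},{\textnormal{y}})]+2\|\theta\|^2\big\|\tilde{Q}_{r,\perp}^\top Q\,\Lambda^{1/2}\big\|^2.$$ Furthermore, with $s:=\min\{r,|\mathcal{I}(\mathcal{F}_\mathcal{E})|\}$,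 $$\big\|\tilde{Q}_{r,\perp}^\top Q\,\Lambda^{1/2}\big\|^2\le\lambda_1(e^+)\,\mathrm{dist}^2(\tilde{Q}_s,Q_s)+\lambda_{s+1}(e^+).$$
   Context: Setting. $\mathcal{E}$ is a set of domains; each domain $e$ has an SCM $\mathcal{M}_e$, all sharing the same exogenous noise ${\mathbf{u}}\sim\mathbb{P}_\mathcal{U}$, latent variables ${\mathbf{z}}$, observed input ${\mathbf{x}}\in\mathbb{R}^d$ and target ${\textnormal{y}}$. Latent mechanisms $f_{e,i}$ may depend on $e$; write $f_e$ for the induced solution map ${\bm{u}}\mapsto{\bm{z}}$. The observed mechanisms are shared across domains: ${\mathbf{x}}_e=g_{\mathbf{x}}(f_e({\mathbf{u}}))$ with $g_{\mathbf{x}}$ linear, and ${\textnormal{y}}=g_{\textnormal{y}}({\mathbf{z}})$ with $g_{\textnormal{y}}$ linear (linear regression) or the sign of a linear function, ${\textnormal{y}}\in\{-1,1\}$ (logistic regression); the SCMs are linear. The intervention set is $\mathcal{I}(\mathcal{F}_\mathcal{E})=\{i:f_{e,i}\neq f_{e',i}\text{ for some }e,e'\in\mathcal{E}\}$, and the spurious correlation assumption is that no $i\in\mathcal{I}(\mathcal{F}_\mathcal{E})$ is an ancestor of ${\textnormal{y}}$. Training domains $\mathcal{E}_{\mathrm{train}}\subseteq\mathcal{E}$ have weights $\mathbb{P}(e)$, and $\mathbb{P}_{\mathrm{train}}=\sum_{e\in\mathcal{E}_{\mathrm{train}}}\mathbb{P}(e)\mathbb{P}_e$; $\mathbb{P}_{\mathrm{test}}$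 is the distribution of domain $e^+$. For the same noise ${\mathbf{u}}$ define ${\mathbf{x}}_{e^+}=g_{\mathbf{x}}(f_{e^+}({\mathbf{u}}))$ and ${\mathbf{x}}_{e^+\to e}=g_{\mathbf{x}}(f_e({\mathbf{u}}))$. Let $M_{e^+}:=\sum_{e\in\mathcal{E}_{\mathrm{train}}}\mathbb{P}(e)\,\mathbb{E}_{\mathbf{u}}[({\mathbf{x}}_{e^+}-{\mathbf{x}}_{e^+\to e})({\mathbf{x}}_{e^+}-{\mathbf{x}}_{e^+\to e})^\top]=Q\Lambda Q^\top$, where $Q\in\mathbb{R}^{d\times|\mathcal{I}(\mathcal{F}_\mathcal{E})|}$ has orthonormal columns and $\Lambda$ is diagonal with the eigenvalues $\lambda_1(e^+)\ge\lambda_2(e^+)\ge\dots$ of $M_{e^+}$ (eigenvalues beyond index $|\mathcal{I}(\mathcal{F}_\mathcal{E})|$ are zero); $Q_s$ denotes the first $s$ columns of $Q$ and $\lambda_j(e^+)$ the $j$-th largest eigenvalue of $M_{e^+}$. NCM: given $k$ (possibly noisy) counterfactual pairs $({\bm{x}}_{e_j},{\bm{x}}_{e'_j})$, let $\tilde{\Delta}_{\mathbf{x}}=[{\bm{x}}_{e_1}-{\bm{x}}_{e'_1},\dots,{\bm{x}}_{e_k}-{\bm{x}}_{e'_k}]\in\mathbb{R}^{d\times k}$; $\tilde{Q}_r\in\mathbb{R}^{d\times r}$ is the matrix of left singular vectors for the $r$ largest singular values of $\tilde{\Delta}_{\mathbf{x}}$ (similarly $\tilde{Q}_s$), and $\tilde{Q}_{r,\perp}\in\mathbb{R}^{d\times(d-r)}$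 is an orthonormal basis of the orthogonal complement of its column space. Predictions are $\theta^\top{\mathbf{x}}$; $\ell_{\mathrm{LL}}(t,y)=\log(1+e^{-yt})$, $\ell_{\mathrm{SE}}(t,y)=(t-y)^2$. $\|\cdot\|$ is the Euclidean/spectral norm, and $\mathrm{dist}(Q,Q'):=\|QQ^\top-Q'Q'^\top\|$. *)

theory Defs
  imports "HOL-Analysis.Analysis" "HOL-Probability.Probability"
begin

text \<open>Latent nodes are indexed by the finite type 'n; each node i has its
  own exogenous noise u\$i, and the noise vector u (shared by all domains) has law P.
  In domain e the mechanism of node i is  z_i = (row i of A e) . z + c e \$ i * u_i.\<close>

definition mech :: "('e \<Rightarrow> real^'n^'n) \<Rightarrow> ('e \<Rightarrow> real^'n) \<Rightarrow> 'e \<Rightarrow> 'n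
    \<Rightarrow> (real^'n \<Rightarrow> real^'n \<Rightarrow> real)" where
  "mech A c e i = (\<lambda>z u. A e $ i \<bullet> z + c e $ i * u $ i)"

definition interv_set :: "('e \<Rightarrow> real^'n^'n) \<Rightarrow> ('e \<Rightarrow> real^'n) \<Rightarrow> 'e set \<Rightarrow> 'n set" where
  "interv_set A c Es = {i. \<exists>e\<in>Es. \<exists>e'\<in>Es. mech A c e i \<noteq> mech A c e' i}"

definition graph_of :: "('e \<Rightarrow> real^'n^'n) \<Rightarrow> 'e \<Rightarrow> ('n \<times> 'n) set" where
  "graph_of A e = {(j, i). A e $ i $ j \<noteq> 0}"

definition latent_edges :: "('e \<Rightarrow> real^'n^'n) \<Rightarrow> 'e set \<Rightarrow> ('n \<times> 'n) set" where
  "latent_edges A Es = (\<Union>e\<in>Es. graph_of A e)"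

text \<open>Node i is an ancestor of the target y = g_y(z), whose parents are the z_j with w\$j \<noteq> 0.\<close>
definition ancestor_of_target :: "('e \<Rightarrow> real^'n^'n) \<Rightarrow> 'e set \<Rightarrow> real^'n \<Rightarrow> 'n \<Rightarrow> bool" where
  "ancestor_of_target A Es w i = (\<exists>j. w $ j \<noteq> 0 \<and> (i, j) \<in> (latent_edges A Es)\<^sup>*)"

definition solve :: "('e \<Rightarrow> real^'n^'n) \<Rightarrow> ('e \<Rightarrow> real^'n) \<Rightarrow> 'e \<Rightarrow> real^'n \<Rightarrow> real^'n" where
  "solve A c e u = (THE z. \<forall>i. z $ i = mech A c e i z u)"

definition obs :: "real^'n^'d \<Rightarrow> ('e \<Rightarrow> real^'n^'n) \<Rightarrow> ('e \<Rightarrow> real^'n) \<Rightarrow> 'e \<Rightarrow> real^'n \<Rightarrow> real^'d" where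
  "obs G A c e u = G *v solve A c e u"

text \<open>Binary target for logistic regression: sign of a linear function, in {-1,1}.\<close>
definition label_sign :: "real^'n \<Rightarrow> real^'n \<Rightarrow> real" where
  "label_sign w z = (if 0 < w \<bullet> z then 1 else -1)"

definition ell_LL :: "real \<Rightarrow> real \<Rightarrow> real" where
  "ell_LL t y = ln (1 + exp (- (y * t)))"

definition ell_SE :: "real \<Rightarrow> real \<Rightarrow> real" where
  "ell_SE t y = (t - y)\<^sup>2"

definition outer :: "real^'d \<Rightarrow> real^'d \<Rightarrow> real^'d^'d" where
  "outer a b = (\<chi> i j. a $ i * b $ j)"

definition orthonormal_upto :: "nat \<Rightarrow> (nat \<Rightarrow> 'a::real_inner) \<Rightarrow> bool" where
  "orthonormal_upto n Q = (\<forall>i<n. \<forall>j<n. Q i \<bullet> Q j = (if i = j then 1 else 0))"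

text \<open>Q_s Q_s^T for the d x s matrix Q_s with columns Q 0, ..., Q (s-1).\<close>
definition span_proj :: "(nat \<Rightarrow> real^'d) \<Rightarrow> nat \<Rightarrow> real^'d^'d" where
  "span_proj Q s = (\<Sum>j<s. outer (Q j) (Q j))"

definition subspace_dist :: "(nat \<Rightarrow> real^'d) \<Rightarrow> (nat \<Rightarrow> real^'d) \<Rightarrow> nat \<Rightarrow> real" where
  "subspace_dist Q Q' s = onorm (\<lambda>x. (span_proj Q s - span_proj Q' s) *v x)"

definition mat_opnorm :: "nat \<Rightarrow> nat \<Rightarrow> (nat \<Rightarrow> nat \<Rightarrow> real) \<Rightarrow> real" where
  "mat_opnorm m n A = (SUP c\<in>{c::nat \<Rightarrow> real. (\<Sum>j<n. (c j)\<^sup>2) \<le> 1}.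
       sqrt (\<Sum>i<m. (\<Sum>j<n. A i j * c j)\<^sup>2))"

end

theory Submission
  imports Defs
begin

lemma mech_eq: "mech A c e i z u = (A e *v z) $ i + c e $ i * u $ i"
  by (simp add: mech_def inner_vec_def matrix_vector_mult_def)

lemma wf_graph: "acyclic (graph_of A e) \<Longrightarrow> wf (graph_of A (e::'e) :: ('n::finite \<times> 'n) set)"
  by (rule finite_acyclic_wf[OF finite_subset[OF subset_UNIV]]) simp_all

lemma fix_zero:
  fixes A :: "'e \<Rightarrow> real^'n::finite^'n"
  assumes ac: "acyclic (graph_of A e)" and d: "A e *v d = d"
  shows "d = 0"
proof -
  have "d $ i = 0" for i
    using wf_graph[OF ac]
  proof (induction i rule: wf_induct_rule)
    case (less i)
    have "d $ i = (\<Sum>j\<in>UNIV. A e $ i $ j * d $ j)"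
      by (subst d[symmetric]) (simp add: matrix_vector_mult_def)
    also have "\<dots> = 0"
      by (rule sum.neutral) (auto simp: graph_of_def intro: less)
    finally show ?case .
  qed
  then show ?thesis by (simp add: vec_eq_iff)
qed

lemma solve_facts:
  fixes A :: "'e \<Rightarrow> real^'n::finite^'n"
  assumes ac: "acyclic (graph_of A e)"
  shows "\<forall>i. solve A c e u $ i = mech A c e i (solve A c e u) u"
    and "(\<forall>i. z $ i = mech A c e i z u) \<Longrightarrow> solve A c e u = z"
proof -
  let ?T = "\<lambda>z. z - A e *v z"
  have lin: "linear ?T" by (rule bounded_linear.linear) (intro bounded_linear_sub bounded_linear_ident matrix_vector_mul_bounded_linear)
  have inj: "inj ?T"
  proof (rule injI)
    fix x y assume "?T x = ?T y"
    then have "A e *v (x - y) = x - y" by (simp add: algebra_simps)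
    then have "x - y = 0" by (rule fix_zero[OF ac])
    then show "x = y" by simp
  qed
  have surj: "surj ?T" using linear_inj_imp_surj[OF lin inj] .
  have char: "(\<forall>i. z $ i = mech A c e i z u) \<longleftrightarrow> ?T z = (\<chi> i. c e $ i * u $ i)" for z
  proof -
    have "(\<forall>i. z $ i = mech A c e i z u) \<longleftrightarrow> (\<forall>i. (?T z) $ i = (\<chi> i. c e $ i * u $ i) $ i)"
      by (simp add: mech_eq diff_eq_eq add_ac)
    also have "\<dots> \<longleftrightarrow> ?T z = (\<chi> i. c e $ i * u $ i)" by (rule vec_eq_iff[symmetric])
    finally show ?thesis .
  qed
  obtain z0 where z0: "(\<chi> i. c e $ i * u $ i) = ?T z0" using surjD[OF surj] by blast
  have uniq: "z = z0" if h: "\<forall>i. z $ i = mech A c e i z u" for z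
  proof -
    have "?T z = ?T z0" using char[of z] h z0 by simp
    then show ?thesis by (rule injD[OF inj])
  qed
  have ex: "\<forall>i. z0 $ i = mech A c e i z0 u" using char[of z0] z0 by simp
  have sz: "solve A c e u = z0" unfolding solve_def
    using ex uniq by (rule the_equality) 
  show "\<forall>i. solve A c e u $ i = mech A c e i (solve A c e u) u" using sz ex by simp
  show "(\<forall>i. z $ i = mech A c e i z u) \<Longrightarrow> solve A c e u = z" using sz uniq by simp
qed

lemma solve_linear:
  fixes A :: "'e \<Rightarrow> real^'n::finite^'n"
  assumes ac: "acyclic (graph_of A e)"
  shows "linear (solve A c e)"
proof (rule linearI)
  fix x y :: "real^'n"
  show "solve A c e (x + y) = solve A c e x + solve A c e y"
    using solve_facts(1)[OF ac, where c=c and u=x] solve_facts(1)[OF ac, where c=c and u=y]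
    by (intro solve_facts(2)[OF ac]) (auto simp: mech_eq algebra_simps)
next
  fix r :: real and x :: "real^'n"
  show "solve A c e (r *\<^sub>R x) = r *\<^sub>R solve A c e x"
    using solve_facts(1)[OF ac, where c=c and u=x]
    by (intro solve_facts(2)[OF ac]) (auto simp: mech_eq algebra_simps)
qed

lemma spurious_eq:
  fixes A :: "'e \<Rightarrow> real^'n::finite^'n"
  assumes ac: "acyclic (graph_of A e)" "acyclic (graph_of A e')" and eE: "e \<in> Es" "e' \<in> Es"
    and sp: "\<forall>i\<in>interv_set A c Es. \<not> ancestor_of_target A Es w i"
  shows "w \<bullet> solve A c e u = w \<bullet> solve A c e' u"
proof -
  define z where "z = solve A c e u"
  define z' where "z' = solve A c e' u"
  have key: "ancestor_of_target A Es w i \<longrightarrow> z $ i = z' $ i" for i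
    using wf_graph[OF ac(1)]
  proof (induction i rule: wf_induct_rule)
    case (less i)
    show ?case
    proof
      assume anc: "ancestor_of_target A Es w i"
      then have "i \<notin> interv_set A c Es" using sp by blast
      then have meq: "mech A c e i = mech A c e' i" using eE unfolding interv_set_def by blast
      have "(A e *v z) $ i = (A e *v z') $ i"
        unfolding matrix_vector_mult_def vec_lambda_beta
      proof (rule sum.cong[OF refl])
        fix j
        show "A e $ i $ j * z $ j = A e $ i $ j * z' $ j"
        proof (cases "A e $ i $ j = 0")
          case False
          then have ed: "(j, i) \<in> graph_of A e" by (simp add: graph_of_def)
          then have "(j, i) \<in> latent_edges A Es" using eE by (auto simp: latent_edges_def)
          then have "ancestor_of_target A Es w j" using anc unfolding ancestor_of_target_def
            by (meson converse_rtrancl_into_rtrancl)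
          then show ?thesis using less ed by simp
        qed simp
      qed
      then have "z $ i = mech A c e i z' u"
        using solve_facts(1)[OF ac(1), where c=c and u=u] by (simp add: z_def mech_eq)
      also have "\<dots> = z' $ i" using meq solve_facts(1)[OF ac(2), where c=c and u=u] by (simp add: z'_def)
      finally show "z $ i = z' $ i" .
    qed
  qed
  have "w \<bullet> z = w \<bullet> z'"
    unfolding inner_vec_def
  proof (rule sum.cong[OF refl])
    fix j show "w $ j \<bullet> z $ j = w $ j \<bullet> z' $ j"
    proof (cases "w $ j = 0")
      case False
      then have "ancestor_of_target A Es w j" unfolding ancestor_of_target_def by blast
      then show ?thesis using key by simp
    qed simp
  qed
  then show ?thesis by (simp add: z_def z'_def)
qed


lemma onorm_sum:
  assumes on: "orthonormal_upto n Q" and J: "J \<subseteq> {..<n}" and k: "k < n"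
  shows "Q k \<bullet> (\<Sum>j\<in>J. a j *\<^sub>R Q j) = (if k \<in> J then a k else 0)"
proof -
  have fJ: "finite J" using J finite_subset by blast
  have "Q k \<bullet> (\<Sum>j\<in>J. a j *\<^sub>R Q j) = (\<Sum>j\<in>J. a j * (Q k \<bullet> Q j))"
    by (simp add: inner_sum_right)
  also have "\<dots> = (\<Sum>j\<in>J. if j = k then a k else 0)"
    using on J k by (intro sum.cong refl) (auto simp: orthonormal_upto_def)
  also have "\<dots> = (if k \<in> J then a k else 0)" using fJ by simp
  finally show ?thesis .
qed

lemma onorm_inner:
  assumes on: "orthonormal_upto n Q" and J: "J \<subseteq> {..<n}"
  shows "(\<Sum>j\<in>J. a j *\<^sub>R Q j) \<bullet> (\<Sum>k\<in>J. b k *\<^sub>R Q k) = (\<Sum>j\<in>J. a j * b j)"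
proof -
  have "(\<Sum>j\<in>J. a j *\<^sub>R Q j) \<bullet> (\<Sum>k\<in>J. b k *\<^sub>R Q k) = (\<Sum>j\<in>J. a j * (Q j \<bullet> (\<Sum>k\<in>J. b k *\<^sub>R Q k)))"
    by (simp add: inner_sum_left)
  also have "\<dots> = (\<Sum>j\<in>J. a j * b j)"
    using J by (intro sum.cong refl) (auto simp: onorm_sum[OF on J])
  finally show ?thesis .
qed

lemma onorm_norm2:
  assumes on: "orthonormal_upto n Q" and J: "J \<subseteq> {..<n}"
  shows "(norm (\<Sum>j\<in>J. a j *\<^sub>R Q j))\<^sup>2 = (\<Sum>j\<in>J. (a j)\<^sup>2)"
proof -
  have "(norm (\<Sum>j\<in>J. a j *\<^sub>R Q j))\<^sup>2 = (\<Sum>j\<in>J. a j *\<^sub>R Q j) \<bullet> (\<Sum>j\<in>J. a j *\<^sub>R Q j)"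
    by (rule power2_norm_eq_inner)
  also have "\<dots> = (\<Sum>j\<in>J. a j * a j)" by (rule onorm_inner[OF on J])
  finally show ?thesis by (simp add: power2_eq_square)
qed

lemma basis_expand:
  fixes b :: "nat \<Rightarrow> real^'d::finite"
  assumes on: "orthonormal_upto CARD('d) b"
  shows "y = (\<Sum>k<CARD('d). (b k \<bullet> y) *\<^sub>R b k)"
proof -
  let ?B = "b ` {..<CARD('d)}"
  have inj: "inj_on b {..<CARD('d)}"
  proof (rule inj_onI)
    fix i j assume ij: "i \<in> {..<CARD('d)}" "j \<in> {..<CARD('d)}" "b i = b j"
    have h: "b i \<bullet> b j = (if i = j then 1 else 0)" using on ij(1,2) by (simp add: orthonormal_upto_def)
    have h2: "b j \<bullet> b j = 1" using on ij(2) by (simp add: orthonormal_upto_def)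
    show "i = j" using h h2 ij(3) by (auto split: if_splits)
  qed
  have card: "card ?B = CARD('d)" using card_image[OF inj] by simp
  have "pairwise orthogonal ?B"
    unfolding pairwise_def orthogonal_def
  proof (intro ballI impI)
    fix x y assume xy: "x \<in> ?B" "y \<in> ?B" "x \<noteq> y"
    obtain i where i: "i < CARD('d)" "x = b i" using xy(1) by auto
    obtain j where j: "j < CARD('d)" "y = b j" using xy(2) by auto
    have "i \<noteq> j" using i j xy(3) by auto
    moreover have "b i \<bullet> b j = (if i = j then 1 else 0)" using on i(1) j(1) by (simp add: orthonormal_upto_def)
    ultimately show "x \<bullet> y = 0" using i j by simp
  qed
  moreover have "0 \<notin> ?B"
  proof
    assume "0 \<in> ?B"
    then obtain k where k: "k < CARD('d)" "b k = 0" by auto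
    have "b k \<bullet> b k = 1" using on k(1) by (simp add: orthonormal_upto_def)
    then show False using k by simp
  qed
  ultimately have ind: "independent ?B" by (rule pairwise_orthogonal_independent)
  have sp: "UNIV \<subseteq> span ?B"
    by (rule card_ge_dim_independent[OF subset_UNIV ind]) (simp add: card)
  define r where "r = y - (\<Sum>k<CARD('d). (b k \<bullet> y) *\<^sub>R b k)"
  have "orthogonal r x" if "x \<in> ?B" for x
  proof -
    obtain k where k: "k < CARD('d)" "x = b k" using \<open>x \<in> ?B\<close> by auto
    have "b k \<bullet> (\<Sum>k<CARD('d). (b k \<bullet> y) *\<^sub>R b k) = b k \<bullet> y"
      using onorm_sum[OF on _ k(1), of "{..<CARD('d)}"] k by simp
    then have "b k \<bullet> r = 0" by (simp add: r_def inner_diff_right)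
    then show ?thesis using k by (simp add: orthogonal_def inner_commute)
  qed
  then have "orthogonal r r" by (intro orthogonal_to_span[of r ?B r]) (use sp in auto)
  then have "r = 0" by (simp add: orthogonal_def)
  then show ?thesis by (simp add: r_def)
qed

lemma parseval:
  fixes b :: "nat \<Rightarrow> real^'d::finite"
  assumes on: "orthonormal_upto CARD('d) b"
  shows "(norm y)\<^sup>2 = (\<Sum>k<CARD('d). (b k \<bullet> y)\<^sup>2)"
proof -
  have e: "(\<Sum>k<CARD('d). (b k \<bullet> y) *\<^sub>R b k) = y" by (rule basis_expand[OF on, symmetric])
  have "(norm (\<Sum>k<CARD('d). (b k \<bullet> y) *\<^sub>R b k))\<^sup>2 = (\<Sum>k<CARD('d). (b k \<bullet> y)\<^sup>2)"
    by (rule onorm_norm2[OF on order_refl])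
  then show ?thesis unfolding e .
qed

lemma sum_split_add: "(\<Sum>k<n + (m::nat). f k) = (\<Sum>k<n. f k) + (\<Sum>i<m. f (n + i)::'a::comm_monoid_add)"
  by (induction m) (auto simp: add.assoc)

lemma combined_on:
  fixes Ut Qp :: "nat \<Rightarrow> real^'d::finite"
  assumes U: "orthonormal_upto CARD('d) Ut" and r: "r \<le> CARD('d)"
    and P: "orthonormal_upto (CARD('d) - r) Qp" and C: "\<forall>i<CARD('d)-r. \<forall>j<r. Qp i \<bullet> Ut j = 0"
  shows "orthonormal_upto CARD('d) (\<lambda>k. if k < r then Ut k else Qp (k - r))"
  unfolding orthonormal_upto_def
proof (intro allI impI)
  fix i j assume ij: "i < CARD('d)" "j < CARD('d)"
  show "(if i < r then Ut i else Qp (i - r)) \<bullet> (if j < r then Ut j else Qp (j - r)) = (if i = j then 1 else 0)"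
  proof (cases "i < r"; cases "j < r")
    assume "i < r" "j < r" then show ?thesis using U ij by (simp add: orthonormal_upto_def)
  next
    assume "i < r" "\<not> j < r" then show ?thesis using C[rule_format, of "j - r" i] ij by (simp add: inner_commute)
  next
    assume "\<not> i < r" "j < r" then show ?thesis using C ij by simp
  next
    assume a: "\<not> i < r" "\<not> j < r"
    then have "Qp (i - r) \<bullet> Qp (j - r) = (if i - r = j - r then 1 else 0)"
      using P ij by (simp add: orthonormal_upto_def)
    then show ?thesis using a by auto
  qed
qed

lemma split_parseval:
  fixes Ut Qp :: "nat \<Rightarrow> real^'d::finite"
  assumes U: "orthonormal_upto CARD('d) Ut" and r: "r \<le> CARD('d)"
    and P: "orthonormal_upto (CARD('d) - r) Qp" and C: "\<forall>i<CARD('d)-r. \<forall>j<r. Qp i \<bullet> Ut j = 0"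
  shows "(norm y)\<^sup>2 = (\<Sum>j<r. (Ut j \<bullet> y)\<^sup>2) + (\<Sum>i<CARD('d)-r. (Qp i \<bullet> y)\<^sup>2)"
    and "(\<forall>j<r. Ut j \<bullet> y = 0) \<Longrightarrow> y = (\<Sum>i<CARD('d)-r. (Qp i \<bullet> y) *\<^sub>R Qp i)"
proof -
  let ?b = "\<lambda>k. if k < r then Ut k else Qp (k - r)"
  have on: "orthonormal_upto CARD('d) ?b" by (rule combined_on[OF U r P C])
  have d: "CARD('d) = r + (CARD('d) - r)" using r by simp
  have "(norm y)\<^sup>2 = (\<Sum>k<CARD('d). (?b k \<bullet> y)\<^sup>2)" by (rule parseval[OF on])
  also have "\<dots> = (\<Sum>k<r + (CARD('d) - r). (?b k \<bullet> y)\<^sup>2)" using d by simp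
  also have "\<dots> = (\<Sum>j<r. (Ut j \<bullet> y)\<^sup>2) + (\<Sum>i<CARD('d)-r. (Qp i \<bullet> y)\<^sup>2)"
    unfolding sum_split_add by simp
  finally show "(norm y)\<^sup>2 = (\<Sum>j<r. (Ut j \<bullet> y)\<^sup>2) + (\<Sum>i<CARD('d)-r. (Qp i \<bullet> y)\<^sup>2)" .
  assume z: "\<forall>j<r. Ut j \<bullet> y = 0"
  have "y = (\<Sum>k<CARD('d). (?b k \<bullet> y) *\<^sub>R ?b k)" by (rule basis_expand[OF on])
  also have "\<dots> = (\<Sum>k<r + (CARD('d) - r). (?b k \<bullet> y) *\<^sub>R ?b k)" using d by simp
  also have "\<dots> = (\<Sum>i<CARD('d)-r. (Qp i \<bullet> y) *\<^sub>R Qp i)"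
    unfolding sum_split_add using z by simp
  finally show "y = (\<Sum>i<CARD('d)-r. (Qp i \<bullet> y) *\<^sub>R Qp i)" .
qed

lemma mo_bdd_pt:
  assumes "(\<Sum>j<n. (c j)\<^sup>2) \<le> (1::real)"
  shows "(\<Sum>i<m. (\<Sum>j<n. a i j * c j)\<^sup>2) \<le> (\<Sum>i<m. \<Sum>j<n. (a i j)\<^sup>2)"
proof (rule sum_mono)
  fix i
  have "(\<Sum>j<n. a i j * c j)\<^sup>2 \<le> (\<Sum>j<n. (a i j)\<^sup>2) * (\<Sum>j<n. (c j)\<^sup>2)"
    by (rule Cauchy_Schwarz_ineq_sum)
  also have "\<dots> \<le> (\<Sum>j<n. (a i j)\<^sup>2) * 1"
    using assms by (intro mult_left_mono) (auto intro: sum_nonneg)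
  finally show "(\<Sum>j<n. a i j * c j)\<^sup>2 \<le> (\<Sum>j<n. (a i j)\<^sup>2)" by simp
qed

lemma mo_bdd: "bdd_above ((\<lambda>c. sqrt (\<Sum>i<m. (\<Sum>j<n. a i j * c j)\<^sup>2)) ` {c::nat \<Rightarrow> real. (\<Sum>j<n. (c j)\<^sup>2) \<le> 1})"
  by (rule bdd_aboveI2[where M="sqrt (\<Sum>i<m. \<Sum>j<n. (a i j)\<^sup>2)"]) (auto intro: mo_bdd_pt)

lemma mo_upper:
  assumes "(\<Sum>j<n. (c j)\<^sup>2) \<le> (1::real)"
  shows "sqrt (\<Sum>i<m. (\<Sum>j<n. a i j * c j)\<^sup>2) \<le> mat_opnorm m n a"
  unfolding mat_opnorm_def by (rule cSUP_upper[OF _ mo_bdd]) (use assms in auto)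

lemma mo_nonneg: "0 \<le> mat_opnorm m n a"
  using mo_upper[where n=n and c="\<lambda>_. 0" and m=m and a=a] by simp

lemma mo_least:
  assumes "\<And>c. (\<Sum>j<n. (c j)\<^sup>2) \<le> (1::real) \<Longrightarrow> (\<Sum>i<m. (\<Sum>j<n. a i j * c j)\<^sup>2) \<le> K"
    and K: "0 \<le> K"
  shows "(mat_opnorm m n a)\<^sup>2 \<le> K"
proof -
  have "mat_opnorm m n a \<le> sqrt K"
    unfolding mat_opnorm_def
    by (rule cSUP_least) (auto intro!: exI[of _ "\<lambda>_. 0"] assms)
  then have "(mat_opnorm m n a)\<^sup>2 \<le> (sqrt K)\<^sup>2" using mo_nonneg by (intro power_mono) auto
  then show ?thesis using K by simp
qed

lemma mo_scaled:
  "(\<Sum>i<m. (\<Sum>j<n. a i j * c j)\<^sup>2) \<le> (mat_opnorm m n a)\<^sup>2 * (\<Sum>j<n. (c j)\<^sup>2)"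
proof (cases "(\<Sum>j<n. (c j)\<^sup>2) = 0")
  case True
  then have "\<forall>j<n. c j = 0" by (simp add: sum_nonneg_eq_0_iff)
  then show ?thesis by simp
next
  case False
  define S where "S = (\<Sum>j<n. (c j)\<^sup>2)"
  have Spos: "S > 0" using False unfolding S_def by (metis less_eq_real_def sum_nonneg zero_le_power2)
  define c' where "c' j = c j / sqrt S" for j
  have "(\<Sum>j<n. (c' j)\<^sup>2) = (\<Sum>j<n. (c j)\<^sup>2) / S"
    using Spos by (simp add: c'_def power_divide sum_divide_distrib)
  then have c'1: "(\<Sum>j<n. (c' j)\<^sup>2) \<le> 1" using Spos by (simp add: S_def)
  have "sqrt (\<Sum>i<m. (\<Sum>j<n. a i j * c' j)\<^sup>2) \<le> mat_opnorm m n a" by (rule mo_upper[OF c'1])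
  moreover have "0 \<le> (\<Sum>i<m. (\<Sum>j<n. a i j * c' j)\<^sup>2)" by (auto intro: sum_nonneg)
  ultimately have "(\<Sum>i<m. (\<Sum>j<n. a i j * c' j)\<^sup>2) \<le> (mat_opnorm m n a)\<^sup>2"
    by (metis power_mono real_sqrt_ge_zero real_sqrt_pow2)
  moreover have "(\<Sum>i<m. (\<Sum>j<n. a i j * c' j)\<^sup>2) = (\<Sum>i<m. (\<Sum>j<n. a i j * c j)\<^sup>2) / S"
    using Spos by (simp add: c'_def sum_divide_distrib[symmetric] power_divide)
  ultimately show ?thesis using Spos by (simp add: S_def[symmetric] divide_le_eq)
qed

lemma mo_transpose:
  "(\<Sum>j<n. (\<Sum>i<m. a i j * v i)\<^sup>2) \<le> (mat_opnorm m n a)\<^sup>2 * (\<Sum>i<m. (v i)\<^sup>2)"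
proof -
  define y where "y j = (\<Sum>i<m. a i j * v i)" for j
  define Y where "Y = (\<Sum>j<n. (y j)\<^sup>2)"
  define z where "z i = (\<Sum>j<n. a i j * y j)" for i
  have "Y = (\<Sum>j<n. y j * (\<Sum>i<m. a i j * v i))" by (simp add: Y_def y_def power2_eq_square)
  also have "\<dots> = (\<Sum>i<m. v i * z i)"
    by (simp add: z_def sum_distrib_left sum_distrib_right mult_ac sum.swap[of _ "{..<n}"])
  finally have Yeq: "Y = (\<Sum>i<m. v i * z i)" .
  have "Y\<^sup>2 \<le> (\<Sum>i<m. (v i)\<^sup>2) * (\<Sum>i<m. (z i)\<^sup>2)" unfolding Yeq by (rule Cauchy_Schwarz_ineq_sum)
  also have "\<dots> \<le> (\<Sum>i<m. (v i)\<^sup>2) * ((mat_opnorm m n a)\<^sup>2 * Y)"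
    unfolding z_def Y_def by (intro mult_left_mono mo_scaled) (auto intro: sum_nonneg)
  finally have h: "Y * Y \<le> ((\<Sum>i<m. (v i)\<^sup>2) * (mat_opnorm m n a)\<^sup>2) * Y" by (simp add: power2_eq_square mult_ac)
  have Y0: "0 \<le> Y" unfolding Y_def by (auto intro: sum_nonneg)
  have "Y \<le> (\<Sum>i<m. (v i)\<^sup>2) * (mat_opnorm m n a)\<^sup>2"
  proof (cases "Y = 0")
    case True then show ?thesis by (simp add: sum_nonneg)
  next
    case False then show ?thesis using h Y0 by (simp add: mult_le_cancel_right)
  qed
  then show ?thesis by (simp add: Y_def y_def mult_ac)
qed

lemma outer_mv: "outer a b *v v = (b \<bullet> v) *\<^sub>R a"
  by (simp add: outer_def matrix_vector_mult_def vec_eq_iff inner_vec_def sum_distrib_left mult_ac)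

lemma sum_mv: "finite J \<Longrightarrow> (\<Sum>j\<in>J. M j) *v v = (\<Sum>j\<in>J. M j *v v)"
  by (induction J rule: finite_induct) (auto simp: matrix_vector_mult_add_rdistrib)

lemma span_proj_mv: "span_proj Q s *v v = (\<Sum>j<s. (Q j \<bullet> v) *\<^sub>R Q j)"
  unfolding span_proj_def by (simp add: sum_mv outer_mv)

lemma amgm_comb:
  fixes a b al be p q :: real
  assumes A: "a\<^sup>2 \<le> al * p" and B: "b\<^sup>2 \<le> be * q" and pos: "0 \<le> a" "0 \<le> b" "0 \<le> al" "0 \<le> be" "0 \<le> p" "0 \<le> q"
  shows "(a + b)\<^sup>2 \<le> (al + be) * (p + q)"
proof -
  have s1: "(a * b)\<^sup>2 \<le> (al * p) * (be * q)"
    unfolding power_mult_distrib by (rule mult_mono[OF A B]) (use pos in simp_all)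
  have s2: "(al * p) * (be * q) = (al * q) * (be * p)" by (simp add: mult_ac)
  have s3: "(al * q) * (be * p) \<le> ((al * q + be * p) / 2)\<^sup>2"
  proof -
    have "((al * q + be * p) / 2)\<^sup>2 - (al * q) * (be * p) = ((al * q - be * p) / 2)\<^sup>2"
      by (simp add: power2_eq_square field_simps)
    moreover have "0 \<le> ((al * q - be * p) / 2)\<^sup>2" by simp
    ultimately show ?thesis by linarith
  qed
  have s4: "0 \<le> (al * q + be * p) / 2" using pos by simp
  have ab: "a * b \<le> (al * q + be * p) / 2"
    by (rule power2_le_imp_le[OF _ s4]) (use s1 s2 s3 in linarith)
  have e: "(a + b)\<^sup>2 = a\<^sup>2 + b\<^sup>2 + 2 * (a * b)" by (simp add: power2_sum)
  have e2: "(al + be) * (p + q) = al * p + be * q + (al * q + be * p)" by (simp add: algebra_simps)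
  have ab2: "2 * (a * b) \<le> al * q + be * p" using ab by (simp add: field_simps)
  show ?thesis unfolding e e2 using A B ab2 by linarith
qed

lemma part3:
  fixes Ut Qp Q :: "nat \<Rightarrow> real^'d::finite"
  assumes U: "orthonormal_upto CARD('d) Ut" and r: "r \<le> CARD('d)"
    and P: "orthonormal_upto (CARD('d) - r) Qp" and C: "\<forall>i<CARD('d)-r. \<forall>j<r. Qp i \<bullet> Ut j = 0"
    and QO: "orthonormal_upto n Q"
    and lnn: "\<forall>j. 0 \<le> lam j"
    and ls: "\<forall>i j. i \<le> j \<longrightarrow> j < n \<longrightarrow> lam j \<le> lam i"
    and s: "s = min r n"
  shows "(mat_opnorm (CARD('d) - r) n (\<lambda>i j. (Qp i \<bullet> Q j) * sqrt (lam j)))\<^sup>2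
           \<le> lam 0 * (subspace_dist Ut Q s)\<^sup>2 + lam s"
proof (rule mo_least)
  show "0 \<le> lam 0 * (subspace_dist Ut Q s)\<^sup>2 + lam s" using lnn by simp
next
  fix c :: "nat \<Rightarrow> real"
  assume c1: "(\<Sum>j<n. (c j)\<^sup>2) \<le> 1"
  let ?m = "CARD('d) - r"
  let ?dd = "subspace_dist Ut Q s"
  define g where "g j = sqrt (lam j) * c j" for j
  define x1 where "x1 = (\<Sum>j<s. g j *\<^sub>R Q j)"
  define x2 where "x2 = (\<Sum>j\<in>{s..<n}. g j *\<^sub>R Q j)"
  define Pm where "Pm y = (\<Sum>i<?m. (Qp i \<bullet> y) *\<^sub>R Qp i)" for y
  have sn: "s \<le> n" "s \<le> r" using s by auto
  have Jn: "{..<n} = {..<s} \<union> {s..<n}" using sn by auto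
  have sumsplit: "(\<Sum>j<n. f j) = (\<Sum>j<s. f j) + (\<Sum>j\<in>{s..<n}. f j)" for f :: "nat \<Rightarrow> real"
    unfolding Jn by (rule sum.union_disjoint) auto
  have Pmn: "(norm (Pm y))\<^sup>2 = (\<Sum>i<?m. (Qp i \<bullet> y)\<^sup>2)" for y
    unfolding Pm_def by (rule onorm_norm2[OF P order_refl])
  have Pmadd: "Pm (y + z) = Pm y + Pm z" for y z
    unfolding Pm_def by (simp add: inner_add_right scaleR_add_left sum.distrib)
  have row: "(\<Sum>j<n. (Qp i \<bullet> Q j) * sqrt (lam j) * c j) = Qp i \<bullet> (x1 + x2)" for i
    unfolding x1_def x2_def g_def inner_add_right inner_sum_right sumsplit[symmetric]
    by (simp add: mult_ac)
  have "(\<Sum>i<?m. (\<Sum>j<n. (Qp i \<bullet> Q j) * sqrt (lam j) * c j)\<^sup>2) = (norm (Pm (x1 + x2)))\<^sup>2"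
    unfolding row Pmn ..
  also have "\<dots> \<le> (norm (Pm x1) + norm (Pm x2))\<^sup>2"
    unfolding Pmadd by (intro power_mono norm_triangle_ineq) simp
  also have "\<dots> \<le> (lam 0 * ?dd\<^sup>2 + lam s) * ((\<Sum>j<s. (c j)\<^sup>2) + (\<Sum>j\<in>{s..<n}. (c j)\<^sup>2))"
  proof (rule amgm_comb)
    have "(norm (Pm x2))\<^sup>2 \<le> (norm x2)\<^sup>2"
      using split_parseval(1)[OF U r P C, of x2] Pmn[of x2] by (simp add: sum_nonneg)
    also have "\<dots> = (\<Sum>j\<in>{s..<n}. (g j)\<^sup>2)" unfolding x2_def by (rule onorm_norm2[OF QO]) auto
    also have "\<dots> \<le> (\<Sum>j\<in>{s..<n}. lam s * (c j)\<^sup>2)"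
      unfolding g_def power_mult_distrib using lnn ls by (intro sum_mono mult_right_mono) auto
    finally show "(norm (Pm x2))\<^sup>2 \<le> lam s * (\<Sum>j\<in>{s..<n}. (c j)\<^sup>2)" by (simp add: sum_distrib_left)
  next
    define p where "p = (\<Sum>j<s. (Ut j \<bullet> x1) *\<^sub>R Ut j)"
    have sd: "{..<s} \<subseteq> {..<CARD('d)}" using sn r by auto
    have x1p: "x1 \<bullet> p = (\<Sum>j<s. (Ut j \<bullet> x1)\<^sup>2)"
      unfolding p_def inner_sum_right by (simp add: power2_eq_square inner_commute)
    have pp: "p \<bullet> p = (\<Sum>j<s. (Ut j \<bullet> x1)\<^sup>2)"
      unfolding p_def onorm_inner[OF U sd] by (simp add: power2_eq_square)
    have "(norm (Pm x1))\<^sup>2 = (norm x1)\<^sup>2 - (\<Sum>j<r. (Ut j \<bullet> x1)\<^sup>2)"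
      using split_parseval(1)[OF U r P C, of x1] Pmn[of x1] by simp
    also have "\<dots> \<le> (norm x1)\<^sup>2 - (\<Sum>j<s. (Ut j \<bullet> x1)\<^sup>2)"
      using sn by (simp add: sum_mono2)
    also have "\<dots> = (norm (x1 - p))\<^sup>2"
    proof -
      have "(norm (x1 - p))\<^sup>2 = (x1 - p) \<bullet> (x1 - p)" by (rule power2_norm_eq_inner)
      also have "\<dots> = x1 \<bullet> x1 - x1 \<bullet> p - p \<bullet> x1 + p \<bullet> p" by (simp add: inner_diff_left inner_diff_right)
      also have "\<dots> = (norm x1)\<^sup>2 - (\<Sum>j<s. (Ut j \<bullet> x1)\<^sup>2)"
        using x1p pp by (simp add: inner_commute[of p x1] power2_norm_eq_inner)
      finally show ?thesis by simp
    qed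
    also have "x1 - p = (span_proj Q s - span_proj Ut s) *v x1"
    proof -
      have "span_proj Q s *v x1 = x1"
        unfolding span_proj_mv
      proof -
        have "(\<Sum>j<s. (Q j \<bullet> x1) *\<^sub>R Q j) = (\<Sum>j<s. g j *\<^sub>R Q j)"
          using sn by (intro sum.cong refl) (auto simp: x1_def onorm_sum[OF QO])
        then show "(\<Sum>j<s. (Q j \<bullet> x1) *\<^sub>R Q j) = x1" by (simp add: x1_def)
      qed
      then show ?thesis by (simp add: matrix_vector_mult_diff_rdistrib span_proj_mv p_def)
    qed
    also have "(norm ((span_proj Q s - span_proj Ut s) *v x1))\<^sup>2 \<le> (?dd * norm x1)\<^sup>2"
    proof (rule power_mono)
      have "norm ((span_proj Q s - span_proj Ut s) *v x1) = norm ((span_proj Ut s - span_proj Q s) *v x1)"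
        by (metis matrix_vector_mult_diff_rdistrib norm_minus_commute)
      also have "\<dots> \<le> ?dd * norm x1"
        unfolding subspace_dist_def by (rule onorm[OF matrix_vector_mul_bounded_linear])
      finally show "norm ((span_proj Q s - span_proj Ut s) *v x1) \<le> ?dd * norm x1" .
    qed simp
    also have "\<dots> = ?dd\<^sup>2 * (\<Sum>j<s. (g j)\<^sup>2)"
      unfolding power_mult_distrib x1_def using sn by (subst onorm_norm2[OF QO]) auto
    also have "\<dots> \<le> ?dd\<^sup>2 * (\<Sum>j<s. lam 0 * (c j)\<^sup>2)"
      unfolding g_def power_mult_distrib using lnn ls sn
      by (intro mult_left_mono sum_mono mult_right_mono) auto
    finally show "(norm (Pm x1))\<^sup>2 \<le> (lam 0 * ?dd\<^sup>2) * (\<Sum>j<s. (c j)\<^sup>2)"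
      by (simp add: sum_distrib_left mult_ac)
  qed (use lnn in \<open>auto intro: sum_nonneg\<close>)
  also have "\<dots> \<le> (lam 0 * ?dd\<^sup>2 + lam s) * 1"
    using c1 lnn unfolding sumsplit[symmetric] by (intro mult_left_mono) auto
  finally show "(\<Sum>i<?m. (\<Sum>j<n. (Qp i \<bullet> Q j) * sqrt (lam j) * c j)\<^sup>2) \<le> lam 0 * ?dd\<^sup>2 + lam s"
    by simp
qed

lemma theta_bound:
  fixes Ut Qp Q :: "nat \<Rightarrow> real^'d::finite"
  assumes U: "orthonormal_upto CARD('d) Ut" and r: "r \<le> CARD('d)"
    and P: "orthonormal_upto (CARD('d) - r) Qp" and C: "\<forall>i<CARD('d)-r. \<forall>j<r. Qp i \<bullet> Ut j = 0"
    and lnn: "\<forall>j. 0 \<le> lam j"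
    and ncm: "\<forall>j<r. \<theta> \<bullet> Ut j = 0"
  shows "(\<Sum>j<n. lam j * (Q j \<bullet> \<theta>)\<^sup>2)
    \<le> (norm \<theta> * mat_opnorm (CARD('d) - r) n (\<lambda>i j. (Qp i \<bullet> Q j) * sqrt (lam j)))\<^sup>2"
proof -
  let ?m = "CARD('d) - r"
  define v where "v i = Qp i \<bullet> \<theta>" for i
  have th: "\<theta> = (\<Sum>i<?m. v i *\<^sub>R Qp i)"
    unfolding v_def by (rule split_parseval(2)[OF U r P C]) (use ncm in \<open>simp add: inner_commute\<close>)
  have nt: "(norm \<theta>)\<^sup>2 = (\<Sum>i<?m. (v i)\<^sup>2)"
    using split_parseval(1)[OF U r P C, of \<theta>] ncm by (simp add: v_def inner_commute)
  have "(\<Sum>j<n. lam j * (Q j \<bullet> \<theta>)\<^sup>2) = (\<Sum>j<n. (\<Sum>i<?m. ((Qp i \<bullet> Q j) * sqrt (lam j)) * v i)\<^sup>2)"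
  proof (rule sum.cong[OF refl])
    fix j
    have "Q j \<bullet> \<theta> = (\<Sum>i<?m. v i * (Qp i \<bullet> Q j))"
      by (subst th) (simp add: inner_sum_right inner_commute)
    then have "sqrt (lam j) * (Q j \<bullet> \<theta>) = (\<Sum>i<?m. ((Qp i \<bullet> Q j) * sqrt (lam j)) * v i)"
      by (simp add: sum_distrib_left mult_ac)
    moreover have "lam j * (Q j \<bullet> \<theta>)\<^sup>2 = (sqrt (lam j) * (Q j \<bullet> \<theta>))\<^sup>2"
      using lnn by (simp add: power_mult_distrib)
    ultimately show "lam j * (Q j \<bullet> \<theta>)\<^sup>2 = (\<Sum>i<?m. ((Qp i \<bullet> Q j) * sqrt (lam j)) * v i)\<^sup>2" by simp
  qed
  also have "\<dots> \<le> (mat_opnorm ?m n (\<lambda>i j. (Qp i \<bullet> Q j) * sqrt (lam j)))\<^sup>2 * (\<Sum>i<?m. (v i)\<^sup>2)"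
    by (rule mo_transpose)
  also have "\<dots> = (norm \<theta> * mat_opnorm ?m n (\<lambda>i j. (Qp i \<bullet> Q j) * sqrt (lam j)))\<^sup>2"
    by (simp add: nt power_mult_distrib)
  finally show ?thesis .
qed

definition sqi :: "'a measure \<Rightarrow> ('a \<Rightarrow> real) \<Rightarrow> bool" where
  "sqi M f \<longleftrightarrow> f \<in> borel_measurable M \<and> integrable M (\<lambda>u. (f u)\<^sup>2)"

lemma sqi_add: assumes "sqi M f" "sqi M g" shows "sqi M (\<lambda>u. f u + g u)"
proof -
  have m: "(\<lambda>u. f u + g u) \<in> borel_measurable M" using assms by (auto simp: sqi_def)
  have i: "integrable M (\<lambda>u. 2 * (f u)\<^sup>2 + 2 * (g u)\<^sup>2)" using assms by (auto simp: sqi_def)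
  have "integrable M (\<lambda>u. (f u + g u)\<^sup>2)"
  proof (rule Bochner_Integration.integrable_bound[OF i])
    show "(\<lambda>u. (f u + g u)\<^sup>2) \<in> borel_measurable M" by (rule borel_measurable_power[OF m])
    show "AE x in M. norm ((f x + g x)\<^sup>2) \<le> norm (2 * (f x)\<^sup>2 + 2 * (g x)\<^sup>2)"
    proof (rule AE_I2)
      fix x
      have "2 * (f x)\<^sup>2 + 2 * (g x)\<^sup>2 - (f x + g x)\<^sup>2 = (f x - g x)\<^sup>2"
        by (simp add: power2_eq_square algebra_simps)
      moreover have "0 \<le> (f x - g x)\<^sup>2" by simp
      ultimately have "(f x + g x)\<^sup>2 \<le> 2 * (f x)\<^sup>2 + 2 * (g x)\<^sup>2" by linarith
      then show "norm ((f x + g x)\<^sup>2) \<le> norm (2 * (f x)\<^sup>2 + 2 * (g x)\<^sup>2)" by simp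
    qed
  qed
  with m show ?thesis by (simp add: sqi_def)
qed

lemma sqi_scale: assumes "sqi M f" shows "sqi M (\<lambda>u. a * f u)"
  using assms by (auto simp: sqi_def power_mult_distrib)

lemma sqi_diff: assumes "sqi M f" "sqi M g" shows "sqi M (\<lambda>u. f u - g u)"
  using sqi_add[OF assms(1) sqi_scale[OF assms(2), of "-1"]] by simp

lemma sqi_zero: "sqi M (\<lambda>u. 0)" by (simp add: sqi_def)

lemma sqi_sum: assumes "finite I" "\<And>i. i \<in> I \<Longrightarrow> sqi M (f i)" shows "sqi M (\<lambda>u. \<Sum>i\<in>I. f i u)"
  using assms by (induction I rule: finite_induct) (auto simp: sqi_zero intro!: sqi_add)

lemma sqi_prod: assumes "sqi M f" "sqi M g" shows "integrable M (\<lambda>u. f u * g u)"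
proof -
  have i: "integrable M (\<lambda>u. (f u)\<^sup>2 + (g u)\<^sup>2)" using assms by (auto simp: sqi_def)
  show ?thesis
  proof (rule Bochner_Integration.integrable_bound[OF i])
    show "(\<lambda>u. f u * g u) \<in> borel_measurable M" using assms by (auto simp: sqi_def)
    show "AE x in M. norm (f x * g x) \<le> norm ((f x)\<^sup>2 + (g x)\<^sup>2)"
    proof (rule AE_I2)
      fix x
      have "(\<bar>f x\<bar> - \<bar>g x\<bar>)\<^sup>2 = \<bar>f x\<bar>\<^sup>2 + \<bar>g x\<bar>\<^sup>2 - 2 * (\<bar>f x\<bar> * \<bar>g x\<bar>)"
        by (simp add: power2_diff)
      then have h: "(\<bar>f x\<bar> - \<bar>g x\<bar>)\<^sup>2 = (f x)\<^sup>2 + (g x)\<^sup>2 - 2 * \<bar>f x * g x\<bar>"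
        by (simp add: abs_mult)
      have "0 \<le> (\<bar>f x\<bar> - \<bar>g x\<bar>)\<^sup>2" by simp
      then have "\<bar>f x * g x\<bar> \<le> (f x)\<^sup>2 + (g x)\<^sup>2" using h abs_ge_zero[of "f x * g x"] by linarith
      then show "norm (f x * g x) \<le> norm ((f x)\<^sup>2 + (g x)\<^sup>2)" by simp
    qed
  qed
qed

lemma sqi_one: "prob_space M \<Longrightarrow> sqi M (\<lambda>u. 1)"
  by (simp add: sqi_def prob_space.finite_measure finite_measure.integrable_const)

lemma sqi_abs: assumes "prob_space M" "sqi M f" shows "integrable M (\<lambda>u. \<bar>f u\<bar>)"
  using integrable_abs[OF sqi_prod[OF assms(2) sqi_one[OF assms(1)]]] by simp

lemma sqi_linear:
  fixes f :: "real^'n::finite \<Rightarrow> real" and P :: "(real^'n) measure"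
  assumes Ps: "sets P = sets borel" and mom: "\<forall>k. integrable P (\<lambda>u. (u $ k)\<^sup>2)" and lf: "linear f"
  shows "sqi P f"
proof -
  have base: "sqi P (\<lambda>u. u $ k)" for k
  proof -
    have "(\<lambda>u. u $ k) \<in> borel_measurable borel" by (intro borel_measurable_continuous_onI continuous_intros)
    then have "(\<lambda>u. u $ k) \<in> borel_measurable P" using measurable_cong_sets[OF Ps refl] by blast
    then show ?thesis using mom by (simp add: sqi_def)
  qed
  have eq: "f u = (\<Sum>k\<in>UNIV. f (axis k 1) * u $ k)" for u
  proof -
    have "f u = f (\<Sum>k\<in>UNIV. (u $ k) *\<^sub>R axis k 1)"
      using basis_expansion[of u] by (simp add: scalar_mult_eq_scaleR)
    also have "\<dots> = (\<Sum>k\<in>UNIV. u $ k * f (axis k 1))"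
      by (simp add: linear_sum[OF lf] linear_scale[OF lf])
    finally show ?thesis by (simp add: mult_ac)
  qed
  have "sqi P (\<lambda>u. \<Sum>k\<in>UNIV. f (axis k 1) * u $ k)"
    by (intro sqi_sum sqi_scale base) auto
  moreover have "f = (\<lambda>u. \<Sum>k\<in>UNIV. f (axis k 1) * u $ k)" by (rule ext) (rule eq)
  ultimately show ?thesis by simp
qed

lemma ln_lip: "ln (1 + exp a) \<le> ln (1 + exp b) + \<bar>a - b\<bar>" for a b :: real
proof -
  have "1 + exp a \<le> (1 + exp b) * exp \<bar>a - b\<bar>"
  proof (cases "a \<le> b")
    case True
    then have "1 + exp a \<le> 1 + exp b" by simp
    also have "\<dots> \<le> (1 + exp b) * exp \<bar>a - b\<bar>"
    proof -
      have "1 \<le> exp \<bar>a - b\<bar>" by simp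
      moreover have "0 \<le> 1 + exp b" using exp_gt_zero[of b] by linarith
      ultimately show ?thesis using mult_left_mono[of 1 "exp \<bar>a - b\<bar>" "1 + exp b"] by simp
    qed
    finally show ?thesis .
  next
    case False
    then have "(1 + exp b) * exp \<bar>a - b\<bar> = exp (a - b) + exp a" by (simp add: distrib_right exp_add[symmetric])
    moreover have "1 \<le> exp (a - b)" using False by simp
    ultimately show ?thesis by simp
  qed
  moreover have pa: "0 < 1 + exp a" using exp_gt_zero[of a] by linarith
  moreover have pb: "0 < 1 + exp b" using exp_gt_zero[of b] by linarith
  ultimately have "ln (1 + exp a) \<le> ln ((1 + exp b) * exp \<bar>a - b\<bar>)"
    by (subst ln_le_cancel_iff) simp_all
  also have "\<dots> = ln (1 + exp b) + \<bar>a - b\<bar>" using pb by (simp add: ln_mult_pos)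
  finally show ?thesis .
qed

lemma label_pm: "label_sign w z = 1 \<or> label_sign w z = -1"
  by (simp add: label_sign_def)

lemma ellLL_lip: assumes "y = 1 \<or> y = -1" shows "ell_LL t y \<le> ell_LL t' y + \<bar>t - t'\<bar>"
proof -
  have "\<bar>- (y * t) - - (y * t')\<bar> = \<bar>t - t'\<bar>" using assms by (auto simp: abs_minus_commute algebra_simps)
  then show ?thesis using ln_lip[of "- (y * t)" "- (y * t')"] by (simp add: ell_LL_def)
qed

lemma ellLL_nonneg: "0 \<le> ell_LL t y"
  by (simp add: ell_LL_def add_pos_pos)

lemma sqrt_trick:
  fixes S M K :: real
  assumes h: "\<And>l. 0 < l \<Longrightarrow> S \<le> (M / l + l) / 2" and MK: "M \<le> K\<^sup>2" and K: "0 \<le> K"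
  shows "S \<le> K"
proof (cases "K = 0")
  case False
  then have Kp: "0 < K" using K by simp
  have h1: "S \<le> (M / K + K) / 2" by (rule h[OF Kp])
  have h2: "M / K \<le> K\<^sup>2 / K" by (rule divide_right_mono[OF MK K])
  have h3: "K\<^sup>2 / K = K" using Kp by (simp add: power2_eq_square)
  have "(M / K + K) / 2 \<le> (K + K) / 2" using h2 h3 by simp
  then have "S \<le> (K + K) / 2" using order_trans[OF h1] by blast
  then show ?thesis by simp
next
  case True
  then have M0: "M \<le> 0" using MK by simp
  show ?thesis
  proof (rule ccontr)
    assume "\<not> S \<le> K"
    then have Sp: "0 < S" using True by simp
    have h1: "S \<le> (M / S + S) / 2" by (rule h[OF Sp])
    have h2: "M / S \<le> 0" by (rule divide_nonpos_pos[OF M0 Sp])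
    have "M / S + S \<le> 0 + S" using h2 by (rule add_right_mono)
    then have "(M / S + S) / 2 \<le> (0 + S) / 2" by (rule divide_right_mono) simp
    then have "S \<le> (0 + S) / 2" by (rule order_trans[OF h1])
    then have "S \<le> S / 2" by simp
    then show False using Sp by linarith
  qed
qed

lemma abs_le_quad:
  fixes x l :: real
  assumes l: "0 < l"
  shows "\<bar>x\<bar> \<le> (x\<^sup>2 / l + l) / 2"
proof -
  have "0 \<le> (\<bar>x\<bar> - l)\<^sup>2" by simp
  moreover have "(\<bar>x\<bar> - l)\<^sup>2 = \<bar>x\<bar>\<^sup>2 + l\<^sup>2 - 2 * \<bar>x\<bar> * l" by (rule power2_diff)
  moreover have "\<bar>x\<bar>\<^sup>2 = x\<^sup>2" by simp
  moreover have "l\<^sup>2 = l * l" by (simp add: power2_eq_square)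
  ultimately have h: "2 * l * \<bar>x\<bar> \<le> x\<^sup>2 + l * l" by (simp add: mult_ac)
  have e: "(x\<^sup>2 / l + l) / 2 = (x\<^sup>2 + l * l) / (2 * l)" using l by (simp add: field_simps)
  have "\<bar>x\<bar> \<le> (x\<^sup>2 + l * l) / (2 * l)" using h l by (simp add: pos_le_divide_eq mult_ac)
  then show ?thesis unfolding e .
qed

lemma sq_le2: "(x + y)\<^sup>2 \<le> 2 * x\<^sup>2 + 2 * (y::real)\<^sup>2"
proof -
  have "2 * x\<^sup>2 + 2 * y\<^sup>2 - (x + y)\<^sup>2 = (x - y)\<^sup>2" by (simp add: power2_eq_square algebra_simps)
  moreover have "0 \<le> (x - y)\<^sup>2" by simp
  ultimately show ?thesis by linarith
qed

lemma LL_int: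
  fixes h f :: "'a \<Rightarrow> real"
  assumes ps: "prob_space M" and f: "sqi M f" and h: "h \<in> borel_measurable M"
  shows "integrable M (\<lambda>u. ell_LL (f u) (if 0 < h u then 1 else -1))"
proof -
  have fm: "f \<in> borel_measurable M" using f by (simp add: sqi_def)
  have meas: "(\<lambda>u. ell_LL (f u) (if 0 < h u then 1 else -1)) \<in> borel_measurable M"
  proof -
    let ?g = "\<lambda>u. if 0 < h u then 1 else -1 :: real"
    have gm: "?g \<in> borel_measurable M"
    proof (rule measurable_If)
      show "{u \<in> space M. 0 < h u} \<in> sets M"
        by (rule borel_measurable_less[of "\<lambda>_. 0" M h, OF _ h]) simp
    qed simp_all
    have km: "(\<lambda>u. - (?g u * f u)) \<in> borel_measurable M"
      by (intro borel_measurable_uminus borel_measurable_times gm fm)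
    have em: "(\<lambda>u. exp (- (?g u * f u))) \<in> borel_measurable M"
      using measurable_compose[OF km borel_measurable_exp] by (simp add: o_def)
    have "(\<lambda>u. ln (1 + exp (- (?g u * f u)))) \<in> borel_measurable M"
      by (intro borel_measurable_ln borel_measurable_add borel_measurable_const em)
    then show ?thesis by (simp add: ell_LL_def)
  qed
  have i: "integrable M (\<lambda>u. ln 2 + \<bar>f u\<bar>)"
    using sqi_abs[OF ps f] by (simp add: prob_space.finite_measure[OF ps] finite_measure.integrable_const)
  show ?thesis
  proof (rule Bochner_Integration.integrable_bound[OF i meas], rule AE_I2)
    fix u
    let ?y = "if 0 < h u then 1 else -1 :: real"
    have y: "?y = 1 \<or> ?y = -1" by simp
    have "ell_LL (f u) ?y \<le> ell_LL 0 ?y + \<bar>f u - 0\<bar>" by (rule ellLL_lip[OF y])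
    moreover have "ell_LL 0 ?y = ln 2" by (simp add: ell_LL_def)
    moreover have "0 \<le> ell_LL (f u) ?y" by (rule ellLL_nonneg)
    moreover have "0 \<le> ln (2::real)" by simp
    ultimately show "norm (ell_LL (f u) ?y) \<le> norm (ln 2 + \<bar>f u\<bar>)" by simp
  qed
qed

theorem theorem1:
  fixes A :: "'e \<Rightarrow> real^'n::finite^'n" and c :: "'e \<Rightarrow> real^'n"
    and G :: "real^'n^'d::finite" and w :: "real^'n"
    and P :: "(real^'n) measure"
    and Es Etrain :: "'e set" and pe :: "'e \<Rightarrow> real" and eplus :: 'e
    and Q :: "nat \<Rightarrow> real^'d" and lam :: "nat \<Rightarrow> real"
    and xa xb :: "'p::finite \<Rightarrow> real^'d"
    and Ut :: "nat \<Rightarrow> real^'d" and V :: "nat \<Rightarrow> real^'p" and sig :: "nat \<Rightarrow> real"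
    and r :: nat and Qperp :: "nat \<Rightarrow> real^'d" and \<theta> :: "real^'d"
  defines "Mplus \<equiv> (\<chi> i j. \<Sum>e\<in>Etrain. pe e *
            (\<integral>u. ((obs G A c eplus u - obs G A c e u) $ i) *
                  ((obs G A c eplus u - obs G A c e u) $ j) \<partial>P))"
    and "s \<equiv> min r (card (interv_set A c Es))"
    and "B \<equiv> mat_opnorm (CARD('d) - r) (card (interv_set A c Es)) (\<lambda>i j. (Qperp i \<bullet> Q j) * sqrt (lam j))"
  assumes dag: "\<forall>e\<in>Es. acyclic (graph_of A e)"
    and spurious: "\<forall>i\<in>(interv_set A c Es). \<not> ancestor_of_target A Es w i"
    and P_prob: "prob_space P" and P_sets: "sets P = sets borel"
    and P_moments: "\<forall>k. integrable P (\<lambda>u. (u $ k)\<^sup>2)"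
    and train_sub: "Etrain \<subseteq> Es" and train_fin: "finite Etrain"
    and pe_nonneg: "\<forall>e\<in>Etrain. 0 \<le> pe e" and pe_sum: "(\<Sum>e\<in>Etrain. pe e) = 1"
    and test_dom: "eplus \<in> Es"
    and Q_orth: "orthonormal_upto (card (interv_set A c Es)) Q"
    and M_eig: "Mplus = (\<Sum>j<card (interv_set A c Es). lam j *\<^sub>R outer (Q j) (Q j))"
    and lam_sorted: "\<forall>i j. i \<le> j \<longrightarrow> j < card (interv_set A c Es) \<longrightarrow> lam j \<le> lam i"
    and lam_zero: "\<forall>j. card (interv_set A c Es) \<le> j \<longrightarrow> lam j = 0"
    and U_orth: "orthonormal_upto CARD('d) Ut"
    and V_orth: "orthonormal_upto CARD('p) V"
    and sig_nonneg: "\<forall>j. 0 \<le> sig j"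
    and sig_sorted: "\<forall>i j. i \<le> j \<longrightarrow> j < min CARD('d) CARD('p) \<longrightarrow> sig j \<le> sig i"
    and svd: "\<forall>p. xa p - xb p = (\<Sum>j<min CARD('d) CARD('p). (sig j * V j $ p) *\<^sub>R Ut j)"
    and r_le: "r \<le> CARD('d)"
    and perp_orth: "orthonormal_upto (CARD('d) - r) Qperp"
    and perp_compl: "\<forall>i<CARD('d) - r. \<forall>j<r. Qperp i \<bullet> Ut j = 0"
    and ncm: "\<forall>j<r. \<theta> \<bullet> Ut j = 0"
  shows "((\<integral>u. ell_LL (\<theta> \<bullet> obs G A c eplus u) (label_sign w (solve A c eplus u)) \<partial>P)
           \<le> (\<Sum>e\<in>Etrain. pe e *
                 (\<integral>u. ell_LL (\<theta> \<bullet> obs G A c e u) (label_sign w (solve A c e u)) \<partial>P))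
              + norm \<theta> * B)
    \<and> ((\<integral>u. ell_SE (\<theta> \<bullet> obs G A c eplus u) (w \<bullet> solve A c eplus u) \<partial>P)
           \<le> 2 * (\<Sum>e\<in>Etrain. pe e *
                 (\<integral>u. ell_SE (\<theta> \<bullet> obs G A c e u) (w \<bullet> solve A c e u) \<partial>P))
              + 2 * (norm \<theta>)\<^sup>2 * B\<^sup>2)
    \<and> (B\<^sup>2 \<le> lam 0 * (subspace_dist Ut Q s)\<^sup>2 + lam s)"
proof -
  let ?n = "card (interv_set A c Es)"
  have ac: "\<And>e. e \<in> Es \<Longrightarrow> acyclic (graph_of A e)" using dag by blast
  have Etr: "\<And>e. e \<in> Etrain \<Longrightarrow> e \<in> Es" using train_sub by blast
  have ep: "acyclic (graph_of A eplus)" using ac test_dom .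
  have lin_obs: "linear (\<lambda>u. v \<bullet> obs G A c e u)" if "e \<in> Es" for e v
  proof -
    have ls: "linear (solve A c e)" by (rule solve_linear[OF ac[OF that]])
    show ?thesis
      by (rule linearI) (simp_all add: obs_def linear_add[OF ls] linear_scale[OF ls]
          matrix_vector_right_distrib matrix_vector_mult_scaleR inner_add_right)
  qed
  have lin_w: "linear (\<lambda>u. w \<bullet> solve A c e u)" if "e \<in> Es" for e
  proof -
    have ls: "linear (solve A c e)" by (rule solve_linear[OF ac[OF that]])
    show ?thesis
      by (rule linearI) (simp_all add: linear_add[OF ls] linear_scale[OF ls] inner_add_right)
  qed
  have sq_obs: "sqi P (\<lambda>u. v \<bullet> obs G A c e u)" if "e \<in> Es" for e v
    by (rule sqi_linear[OF P_sets P_moments lin_obs[OF that]])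
  have sq_w: "sqi P (\<lambda>u. w \<bullet> solve A c e u)" if "e \<in> Es" for e
    by (rule sqi_linear[OF P_sets P_moments lin_w[OF that]])
  define D where "D e u = obs G A c eplus u - obs G A c e u" for e u
  have sq_D: "sqi P (\<lambda>u. v \<bullet> D e u)" if "e \<in> Es" for e v
    unfolding D_def inner_diff_right by (intro sqi_diff sq_obs that test_dom)
  have sq_Dc: "sqi P (\<lambda>u. D e u $ i)" if "e \<in> Es" for e i
    using sq_D[OF that, of "axis i 1"] by (simp add: cart_eq_inner_axis inner_commute)
  have yeq: "w \<bullet> solve A c e u = w \<bullet> solve A c eplus u" if "e \<in> Es" for e u
    by (rule spurious_eq[OF ac[OF that] ep that test_dom spurious])
  have quadM: "v \<bullet> (Mplus *v v) = (\<Sum>e\<in>Etrain. pe e * (\<integral>u. (v \<bullet> D e u)\<^sup>2 \<partial>P))" for v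
  proof -
    have e1: "(\<integral>u. (v \<bullet> D e u)\<^sup>2 \<partial>P) = (\<Sum>i\<in>UNIV. \<Sum>j\<in>UNIV. v $ i * v $ j * (\<integral>u. D e u $ i * D e u $ j \<partial>P))"
      if "e \<in> Etrain" for e
    proof -
      have "(\<lambda>u. (v \<bullet> D e u)\<^sup>2) = (\<lambda>u. \<Sum>i\<in>UNIV. \<Sum>j\<in>UNIV. v $ i * v $ j * (D e u $ i * D e u $ j))"
        by (simp add: inner_vec_def power2_eq_square sum_product mult_ac)
      then have "(\<integral>u. (v \<bullet> D e u)\<^sup>2 \<partial>P) = (\<integral>u. (\<Sum>i\<in>UNIV. \<Sum>j\<in>UNIV. v $ i * v $ j * (D e u $ i * D e u $ j)) \<partial>P)"
        by simp
      also have "\<dots> = (\<Sum>i\<in>UNIV. \<Sum>j\<in>UNIV. v $ i * v $ j * (\<integral>u. D e u $ i * D e u $ j \<partial>P))"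
        using sqi_prod[OF sq_Dc[OF Etr[OF that]] sq_Dc[OF Etr[OF that]]]
        by (simp add: integral_sum integrable_sum)
      finally show ?thesis .
    qed
    have "v \<bullet> (Mplus *v v) = (\<Sum>i\<in>UNIV. \<Sum>j\<in>UNIV. \<Sum>e\<in>Etrain. pe e * (v $ i * v $ j * (\<integral>u. D e u $ i * D e u $ j \<partial>P)))"
      by (simp add: Mplus_def D_def inner_vec_def matrix_vector_mult_def sum_distrib_left sum_distrib_right mult_ac)
    also have "\<dots> = (\<Sum>e\<in>Etrain. \<Sum>i\<in>UNIV. \<Sum>j\<in>UNIV. pe e * (v $ i * v $ j * (\<integral>u. D e u $ i * D e u $ j \<partial>P)))"
      by (simp add: sum.swap[of _ Etrain])
    also have "\<dots> = (\<Sum>e\<in>Etrain. pe e * (\<integral>u. (v \<bullet> D e u)\<^sup>2 \<partial>P))"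
      by (intro sum.cong refl) (simp add: e1 sum_distrib_left)
    finally show ?thesis .
  qed
  have quadE: "v \<bullet> (Mplus *v v) = (\<Sum>j<?n. lam j * (Q j \<bullet> v)\<^sup>2)" for v
    unfolding M_eig
    by (simp add: sum_mv outer_mv scaleR_matrix_vector_assoc[symmetric] inner_sum_right power2_eq_square mult_ac inner_commute)
  have lnn: "\<forall>j. 0 \<le> lam j"
  proof
    fix j show "0 \<le> lam j"
    proof (cases "j < ?n")
      case True
      have "(\<Sum>k<?n. lam k * (Q k \<bullet> Q j)\<^sup>2) = (\<Sum>k<?n. if k = j then lam j else 0)"
        using Q_orth True by (intro sum.cong refl) (auto simp: orthonormal_upto_def)
      also have "\<dots> = lam j" using True by simp
      finally have "lam j = Q j \<bullet> (Mplus *v Q j)" using quadE by simp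
      also have "\<dots> \<ge> 0" unfolding quadM using pe_nonneg
        by (intro sum_nonneg mult_nonneg_nonneg integral_nonneg) auto
      finally show ?thesis .
    next
      case False then show ?thesis using lam_zero by simp
    qed
  qed
  have B0: "0 \<le> B" unfolding B_def by (rule mo_nonneg)
  have MK: "(\<Sum>e\<in>Etrain. pe e * (\<integral>u. (\<theta> \<bullet> D e u)\<^sup>2 \<partial>P)) \<le> (norm \<theta> * B)\<^sup>2"
    unfolding quadM[symmetric] quadE B_def
    by (rule theta_bound[OF U_orth r_le perp_orth perp_compl lnn ncm])
  have psP: "prob_space P" by (rule P_prob)
  have abs_sum: "(\<Sum>e\<in>Etrain. pe e * (\<integral>u. \<bar>\<theta> \<bullet> D e u\<bar> \<partial>P)) \<le> norm \<theta> * B"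
  proof (rule sqrt_trick[OF _ MK])
    fix l :: real assume l: "0 < l"
    have "(\<Sum>e\<in>Etrain. pe e * (\<integral>u. \<bar>\<theta> \<bullet> D e u\<bar> \<partial>P))
       \<le> (\<Sum>e\<in>Etrain. pe e * (((\<integral>u. (\<theta> \<bullet> D e u)\<^sup>2 \<partial>P) / l + l) / 2))"
    proof (intro sum_mono mult_left_mono)
      fix e assume e: "e \<in> Etrain"
      have i2: "integrable P (\<lambda>u. (\<theta> \<bullet> D e u)\<^sup>2)" using sq_D[OF Etr[OF e]] by (simp add: sqi_def)
      have "(\<integral>u. \<bar>\<theta> \<bullet> D e u\<bar> \<partial>P) \<le> (\<integral>u. ((\<theta> \<bullet> D e u)\<^sup>2 / l + l) / 2 \<partial>P)"
        using l sqi_abs[OF psP sq_D[OF Etr[OF e]]] i2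
        by (intro integral_mono abs_le_quad) (auto simp: prob_space.finite_measure[OF psP] finite_measure.integrable_const)
      also have "\<dots> = ((\<integral>u. (\<theta> \<bullet> D e u)\<^sup>2 \<partial>P) / l + l) / 2"
        using i2 by (simp add: prob_space.prob_space[OF psP] prob_space.finite_measure[OF psP] finite_measure.integrable_const)
      finally show "(\<integral>u. \<bar>\<theta> \<bullet> D e u\<bar> \<partial>P) \<le> ((\<integral>u. (\<theta> \<bullet> D e u)\<^sup>2 \<partial>P) / l + l) / 2" .
      show "0 \<le> pe e" using pe_nonneg e by blast
    qed
    also have "\<dots> = ((\<Sum>e\<in>Etrain. pe e * (\<integral>u. (\<theta> \<bullet> D e u)\<^sup>2 \<partial>P)) / l + l) / 2"
      using pe_sum by (simp add: sum_divide_distrib[symmetric] sum.distrib sum_distrib_left[symmetric] sum_distrib_right[symmetric] algebra_simps)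
    finally show "(\<Sum>e\<in>Etrain. pe e * (\<integral>u. \<bar>\<theta> \<bullet> D e u\<bar> \<partial>P))
       \<le> ((\<Sum>e\<in>Etrain. pe e * (\<integral>u. (\<theta> \<bullet> D e u)\<^sup>2 \<partial>P)) / l + l) / 2" .
  next
    show "0 \<le> norm \<theta> * B" using B0 by simp
  qed
  have pe_nn: "\<And>e. e \<in> Etrain \<Longrightarrow> 0 \<le> pe e" using pe_nonneg by blast
  have avg: "X = (\<Sum>e\<in>Etrain. pe e * X)" for X :: real
    using pe_sum by (simp add: sum_distrib_right[symmetric])
  have lab: "label_sign w z = (if 0 < w \<bullet> z then 1 else -1)" for z by (simp add: label_sign_def)
  have intLL: "integrable P (\<lambda>u. ell_LL (\<theta> \<bullet> obs G A c e u) (label_sign w (solve A c e u)))"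
    if "e \<in> Es" for e
  proof -
    have hm: "(\<lambda>u. w \<bullet> solve A c e u) \<in> borel_measurable P" using sq_w[OF that] by (simp add: sqi_def)
    show ?thesis unfolding lab by (rule LL_int[OF psP sq_obs[OF that] hm])
  qed
  have intabs: "integrable P (\<lambda>u. \<bar>\<theta> \<bullet> D e u\<bar>)" if "e \<in> Es" for e
    by (rule sqi_abs[OF psP sq_D[OF that]])
  have int2: "integrable P (\<lambda>u. (\<theta> \<bullet> D e u)\<^sup>2)" if "e \<in> Es" for e
    using sq_D[OF that] by (simp add: sqi_def)
  have sqSE: "sqi P (\<lambda>u. \<theta> \<bullet> obs G A c e u - w \<bullet> solve A c e u)" if "e \<in> Es" for e
    by (rule sqi_diff[OF sq_obs[OF that] sq_w[OF that]])
  have intSE: "integrable P (\<lambda>u. ell_SE (\<theta> \<bullet> obs G A c e u) (w \<bullet> solve A c e u))" if "e \<in> Es" for e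
    using sqSE[OF that] by (simp add: sqi_def ell_SE_def)
  let ?Lp = "\<integral>u. ell_LL (\<theta> \<bullet> obs G A c eplus u) (label_sign w (solve A c eplus u)) \<partial>P"
  let ?Le = "\<lambda>e. \<integral>u. ell_LL (\<theta> \<bullet> obs G A c e u) (label_sign w (solve A c e u)) \<partial>P"
  have a1: "?Lp \<le> ?Le e + (\<integral>u. \<bar>\<theta> \<bullet> D e u\<bar> \<partial>P)" if e: "e \<in> Etrain" for e
  proof -
    have eE: "e \<in> Es" using Etr[OF e] .
    have pt: "ell_LL (\<theta> \<bullet> obs G A c eplus u) (label_sign w (solve A c eplus u))
        \<le> ell_LL (\<theta> \<bullet> obs G A c e u) (label_sign w (solve A c e u)) + \<bar>\<theta> \<bullet> D e u\<bar>" for u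
    proof -
      have l: "label_sign w (solve A c eplus u) = label_sign w (solve A c e u)"
        using yeq[OF eE, of u] by (simp add: label_sign_def)
      have d: "\<theta> \<bullet> obs G A c eplus u - \<theta> \<bullet> obs G A c e u = \<theta> \<bullet> D e u"
        by (simp add: D_def inner_diff_right)
      show ?thesis unfolding l d[symmetric] by (rule ellLL_lip[OF label_pm])
    qed
    have "?Lp \<le> (\<integral>u. ell_LL (\<theta> \<bullet> obs G A c e u) (label_sign w (solve A c e u)) + \<bar>\<theta> \<bullet> D e u\<bar> \<partial>P)"
      by (rule integral_mono[OF intLL[OF test_dom] Bochner_Integration.integrable_add[OF intLL[OF eE] intabs[OF eE]] pt])
    also have "\<dots> = ?Le e + (\<integral>u. \<bar>\<theta> \<bullet> D e u\<bar> \<partial>P)"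
      by (rule Bochner_Integration.integral_add[OF intLL[OF eE] intabs[OF eE]])
    finally show ?thesis .
  qed
  have partA: "?Lp \<le> (\<Sum>e\<in>Etrain. pe e * ?Le e) + norm \<theta> * B"
  proof -
    have "?Lp = (\<Sum>e\<in>Etrain. pe e * ?Lp)" by (rule avg)
    also have "\<dots> \<le> (\<Sum>e\<in>Etrain. pe e * (?Le e + (\<integral>u. \<bar>\<theta> \<bullet> D e u\<bar> \<partial>P)))"
      by (intro sum_mono mult_left_mono a1 pe_nn)
    also have "\<dots> = (\<Sum>e\<in>Etrain. pe e * ?Le e) + (\<Sum>e\<in>Etrain. pe e * (\<integral>u. \<bar>\<theta> \<bullet> D e u\<bar> \<partial>P))"
      by (simp add: distrib_left sum.distrib)
    also have "\<dots> \<le> (\<Sum>e\<in>Etrain. pe e * ?Le e) + norm \<theta> * B"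
      using abs_sum by linarith
    finally show ?thesis .
  qed
  let ?Sp = "\<integral>u. ell_SE (\<theta> \<bullet> obs G A c eplus u) (w \<bullet> solve A c eplus u) \<partial>P"
  let ?Se = "\<lambda>e. \<integral>u. ell_SE (\<theta> \<bullet> obs G A c e u) (w \<bullet> solve A c e u) \<partial>P"
  have b1: "?Sp \<le> 2 * ?Se e + 2 * (\<integral>u. (\<theta> \<bullet> D e u)\<^sup>2 \<partial>P)" if e: "e \<in> Etrain" for e
  proof -
    have eE: "e \<in> Es" using Etr[OF e] .
    have pt: "ell_SE (\<theta> \<bullet> obs G A c eplus u) (w \<bullet> solve A c eplus u)
        \<le> 2 * ell_SE (\<theta> \<bullet> obs G A c e u) (w \<bullet> solve A c e u) + 2 * (\<theta> \<bullet> D e u)\<^sup>2" for u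
    proof -
      have d: "\<theta> \<bullet> obs G A c eplus u - w \<bullet> solve A c eplus u
          = (\<theta> \<bullet> obs G A c e u - w \<bullet> solve A c e u) + \<theta> \<bullet> D e u"
        using yeq[OF eE, of u] by (simp add: D_def inner_diff_right)
      show ?thesis unfolding ell_SE_def d by (rule sq_le2)
    qed
    have i2: "integrable P (\<lambda>u. 2 * ell_SE (\<theta> \<bullet> obs G A c e u) (w \<bullet> solve A c e u) + 2 * (\<theta> \<bullet> D e u)\<^sup>2)"
      using intSE[OF eE] int2[OF eE] by simp
    have "?Sp \<le> (\<integral>u. 2 * ell_SE (\<theta> \<bullet> obs G A c e u) (w \<bullet> solve A c e u) + 2 * (\<theta> \<bullet> D e u)\<^sup>2 \<partial>P)"
      by (rule integral_mono[OF intSE[OF test_dom] i2 pt])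
    also have "\<dots> = 2 * ?Se e + 2 * (\<integral>u. (\<theta> \<bullet> D e u)\<^sup>2 \<partial>P)"
      using intSE[OF eE] int2[OF eE] by simp
    finally show ?thesis .
  qed
  have partB: "?Sp \<le> 2 * (\<Sum>e\<in>Etrain. pe e * ?Se e) + 2 * (norm \<theta>)\<^sup>2 * B\<^sup>2"
  proof -
    have "?Sp = (\<Sum>e\<in>Etrain. pe e * ?Sp)" by (rule avg)
    also have "\<dots> \<le> (\<Sum>e\<in>Etrain. pe e * (2 * ?Se e + 2 * (\<integral>u. (\<theta> \<bullet> D e u)\<^sup>2 \<partial>P)))"
      by (intro sum_mono mult_left_mono b1 pe_nn)
    also have "\<dots> = 2 * (\<Sum>e\<in>Etrain. pe e * ?Se e) + 2 * (\<Sum>e\<in>Etrain. pe e * (\<integral>u. (\<theta> \<bullet> D e u)\<^sup>2 \<partial>P))"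
      by (simp add: distrib_left sum.distrib sum_distrib_left mult_ac)
    also have "\<dots> \<le> 2 * (\<Sum>e\<in>Etrain. pe e * ?Se e) + 2 * (norm \<theta> * B)\<^sup>2"
      using MK by linarith
    finally show ?thesis by (simp add: power_mult_distrib mult_ac)
  qed
  have partC: "B\<^sup>2 \<le> lam 0 * (subspace_dist Ut Q s)\<^sup>2 + lam s"
    unfolding B_def by (rule part3[OF U_orth r_le perp_orth perp_compl Q_orth lnn lam_sorted s_def[THEN meta_eq_to_obj_eq]])
  show ?thesis using partA partB partC by blast
qed

end
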